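(* Let $X\subseteq\mathbb{R}^k$ be a set of feasible alternatives, $\mathbf{f}=(f_1,f_2):X\to\mathbb{R}^2$ a vector criterion and $Y=\mathbf{f}(X)$. Consider three decision makers whose preference relations $\succ_1,\succ_2,\succ_3$ on $\mathbb{R}^2$ are cone relations with cones $K_1,K_2,K_3$, each $K_l$ being a convex pointed cone with $\mathbb{R}^2_+\subseteq K_l$ and $\mathbf{0}_2\notin K_l$. For $l=1,2,3$ let $$\mathbf{y}^{(l)}=\begin{pmatrix} w_1^{(l)}\\ -w_2^{(l)}\end{pmatrix},\qquad \bar{\mathbf{y}}^{(l)}=\begin{pmatrix} -v_1^{(l)}\\ v_2^{(l)}\end{pmatrix},$$ with all $w_i^{(l)},v_i^{(l)}>0$, be given such that $\mathbf{y}^{(l)}\succ_l\mathbf{0}_2$ and $\bar{\mathbf{y}}^{(l)}\succ_l\mathbf{0}_2$, where no two of $\mathbf{y}^{(1)},\mathbf{y}^{(2)},\mathbf{y}^{(3)}$ are codirectional, no two of $\bar{\mathbf{y}}^{(1)},\bar{\mathbf{y}}^{(2)},\bar{\mathbf{y}}^{(3)}$ are codirectional, and $w_1^{(l)}v_2^{(l)}-w_2^{(l)}v_1^{(l)}>0$ for every $l\in\{1,2,3\}$. Put $W(l,s)=w_1^{(l)}w_2^{(s)}-w_2^{(l)}w_1^{(s)}$ and $V(l,s)=v_2^{(l)}v_1^{(s)}-v_1^{(l)}v_2^{(s)}$. Then there exist unique indices $s_1,s_2\in\{1,2,3\}$ such that $W(l_1,s_1)>0$, $W(s_1,k_1)>0$,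 $V(l_2,s_2)>0$, $V(s_2,k_2)>0$ for some indices $l_q,k_q\in\{1,2,3\}$ with $l_q\ne k_q$, $l_q\neq s_q$, $k_q\ne s_q$ ($q=1,2$). Assume moreover that $w_1^{(s_1)}v_2^{(s_2)}-w_2^{(s_1)}v_1^{(s_2)}>0$. Define the vector criterion $\mathbf{g}=(g_1,g_2)$ on $X$ by $g_1=v_2^{(s_2)}f_1+v_1^{(s_2)}f_2$, $g_2=w_2^{(s_1)}f_1+w_1^{(s_1)}f_2$. Then $\hat P_{\mathbf{g}}(Y)\subseteq P(Y)$, where $\hat P_{\mathbf{g}}(Y)=\mathbf{f}(P_{\mathbf{g}}(X))$.
   Context: For $\mathbf{a},\mathbf{b}\in\mathbb{R}^m$, $\mathbf{a}\geq\mathbf{b}$ means $a_i\ge b_i$ for all $i$ and $\mathbf{a}\neq\mathbf{b}$; $\mathbb{R}^m_+=\{\mathbf{y}\in\mathbb{R}^m:\mathbf{y}\geq\mathbf{0}_m\}$. A binary relation $\mathfrak{R}$ on $\mathbb{R}^m$ is a cone relation with cone $K$ if $\mathbf{y}^{(1)}\mathfrak{R}\,\mathbf{y}^{(2)}\iff \mathbf{y}^{(1)}-\mathbf{y}^{(2)}\in K$. The Pareto set is $P(Y)=\{\mathbf{y}^*\in Y:\ \nexists\,\mathbf{y}\in Y,\ \mathbf{y}\geq\mathbf{y}^*\}$, and for a vector criterion $\mathbf{g}$ on $X$, $P_{\mathbf{g}}(X)=\{\mathbf{x}^*\in X:\ \nexists\,\mathbf{x}\in X,\ \mathbf{g}(\mathbf{x})\geq\mathbf{g}(\mathbf{x}^*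 )\}$. Two vectors are codirectional if one is a positive multiple of the other. *)

theory Defs
  imports "HOL-Analysis.Analysis"
begin

definition vgeq :: "real^'m \<Rightarrow> real^'m \<Rightarrow> bool" where
  "vgeq a b \<longleftrightarrow> (\<forall>i. a $ i \<ge> b $ i) \<and> a \<noteq> b"

definition pareto_set :: "(real^'m) set \<Rightarrow> (real^'m) set" where
  "pareto_set Y = {y \<in> Y. \<not> (\<exists>y'\<in>Y. vgeq y' y)}"

definition pareto_alt :: "('x \<Rightarrow> real^'m) \<Rightarrow> 'x set \<Rightarrow> 'x set" where
  "pareto_alt g X = {x \<in> X. \<not> (\<exists>x'\<in>X. vgeq (g x') (g x))}"

definition cone_relation :: "('a::real_vector \<Rightarrow> 'a \<Rightarrow> bool) \<Rightarrow> 'a set \<Rightarrow> bool" where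
  "cone_relation R K \<longleftrightarrow> (\<forall>a b. R a b \<longleftrightarrow> a - b \<in> K)"

definition pos_cone :: "'a::real_vector set \<Rightarrow> bool" where
  "pos_cone K \<longleftrightarrow> (\<forall>y\<in>K. \<forall>c>0. c *\<^sub>R y \<in> K)"

definition pointed :: "'a::real_vector set \<Rightarrow> bool" where
  "pointed K \<longleftrightarrow> (\<forall>y\<in>K. - y \<notin> K)"

definition codirectional :: "'a::real_vector \<Rightarrow> 'a \<Rightarrow> bool" where
  "codirectional a b \<longleftrightarrow> (\<exists>c>0. a = c *\<^sub>R b)"

definition nonneg_orthant :: "(real^'m) set" where
  "nonneg_orthant = {y. vgeq y 0}"

end

theory Submission
  imports Defs
begin

lemma codir1:
  fixes a b c d :: real
  assumes "a > 0" "c > 0" "a * d = b * c"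
  shows "codirectional (vector [a, - b] :: real^2) (vector [c, - d])"
  unfolding codirectional_def
proof (intro exI[of _ "a / c"] conjI)
  show "a / c > 0" using assms by simp
  have "b = a / c * d" using assms by (simp add: field_simps)
  then show "vector [a, - b] = (a / c) *\<^sub>R (vector [c, - d] :: real^2)"
    using assms by (simp add: vec_eq_iff forall_2 vector_2)
qed

lemma codir2:
  fixes a b c d :: real
  assumes "b > 0" "d > 0" "a * d = b * c"
  shows "codirectional (vector [- a, b] :: real^2) (vector [- c, d])"
  unfolding codirectional_def
proof (intro exI[of _ "b / d"] conjI)
  show "b / d > 0" using assms by simp
  have "a = b / d * c" using assms by (simp add: field_simps)
  then show "vector [- a, b] = (b / d) *\<^sub>R (vector [- c, d] :: real^2)"
    using assms by (simp add: vec_eq_iff forall_2 vector_2)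
qed

lemma median3:
  fixes r :: "nat \<Rightarrow> real" and P :: "nat \<Rightarrow> nat \<Rightarrow> bool"
  assumes "r 1 \<noteq> r 2" "r 1 \<noteq> r 3" "r 2 \<noteq> r 3"
    and "\<forall>l\<in>{1,2,3}. \<forall>s\<in>{1,2,3}. P l s \<longleftrightarrow> r l < r s"
  shows "\<exists>!s. s \<in> {1,2,3} \<and> (\<exists>l\<in>{1,2,3}. \<exists>k\<in>{1,2,3}.
              l \<noteq> k \<and> l \<noteq> s \<and> k \<noteq> s \<and> P l s \<and> P s k)"
proof -
  have bex3: "(\<exists>x\<in>{1,2,3::nat}. \<Phi> x) \<longleftrightarrow> \<Phi> 1 \<or> \<Phi> 2 \<or> \<Phi> 3" for \<Phi> by simp
  have mem: "s \<in> {1,2,3::nat} \<longleftrightarrow> s = 1 \<or> s = 2 \<or> s = 3" for s by simp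
  have Pv: "P 1 2 = (r 1 < r 2)" "P 1 3 = (r 1 < r 3)" "P 2 1 = (r 2 < r 1)"
    "P 2 3 = (r 2 < r 3)" "P 3 1 = (r 3 < r 1)" "P 3 2 = (r 3 < r 2)"
    using assms(4) by simp_all
  let ?Q = "\<lambda>s. s \<in> {1,2,3} \<and> (\<exists>l\<in>{1,2,3}. \<exists>k\<in>{1,2,3}.
              l \<noteq> k \<and> l \<noteq> s \<and> k \<noteq> s \<and> P l s \<and> P s k)"
  have eq: "?Q s \<longleftrightarrow> (s = 1 \<and> (r 2 < r 1 \<and> r 1 < r 3 \<or> r 3 < r 1 \<and> r 1 < r 2))
     \<or> (s = 2 \<and> (r 1 < r 2 \<and> r 2 < r 3 \<or> r 3 < r 2 \<and> r 2 < r 1))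
     \<or> (s = 3 \<and> (r 1 < r 3 \<and> r 3 < r 2 \<or> r 2 < r 3 \<and> r 3 < r 1))" for s
    unfolding bex3 mem by (cases "s = 1"; cases "s = 2"; cases "s = 3") (simp_all add: Pv Pv[simplified])
  show ?thesis unfolding eq using assms(1-3) by (smt (verit))
qed

theorem theorem3:
  fixes X :: "(real^'k) set"
    and f :: "real^'k \<Rightarrow> real^2"
    and R :: "nat \<Rightarrow> real^2 \<Rightarrow> real^2 \<Rightarrow> bool"
    and K :: "nat \<Rightarrow> (real^2) set"
    and w1 w2 v1 v2 :: "nat \<Rightarrow> real"
  defines "Y \<equiv> f ` X"
  defines "W \<equiv> (\<lambda>l s. w1 l * w2 s - w2 l * w1 s)"
  defines "V \<equiv> (\<lambda>l s. v2 l * v1 s - v1 l * v2 s)"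
  assumes rel: "\<forall>l\<in>{1,2,3}. cone_relation (R l) (K l)"
    and cone: "\<forall>l\<in>{1,2,3}. convex (K l) \<and> pos_cone (K l) \<and> pointed (K l)
                 \<and> nonneg_orthant \<subseteq> K l \<and> 0 \<notin> K l"
    and pos: "\<forall>l\<in>{1,2,3}. w1 l > 0 \<and> w2 l > 0 \<and> v1 l > 0 \<and> v2 l > 0"
    and pref: "\<forall>l\<in>{1,2,3}. R l (vector [w1 l, - w2 l]) 0 \<and> R l (vector [- v1 l, v2 l]) 0"
    and ncod_y: "\<forall>l\<in>{1,2,3}. \<forall>s\<in>{1,2,3}. l \<noteq> s \<longrightarrow>
                  \<not> codirectional (vector [w1 l, - w2 l] :: real^2) (vector [w1 s, - w2 s])"
    and ncod_ybar: "\<forall>l\<in>{1,2,3}. \<forall>s\<in>{1,2,3}. l \<noteq> s \<longrightarrow>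
                  \<not> codirectional (vector [- v1 l, v2 l] :: real^2) (vector [- v1 s, v2 s])"
    and det: "\<forall>l\<in>{1,2,3}. w1 l * v2 l - w2 l * v1 l > 0"
  shows "(\<exists>!s1. s1 \<in> {1,2,3} \<and> (\<exists>l\<in>{1,2,3}. \<exists>k\<in>{1,2,3}.
              l \<noteq> k \<and> l \<noteq> s1 \<and> k \<noteq> s1 \<and> W l s1 > 0 \<and> W s1 k > 0))
       \<and> (\<exists>!s2. s2 \<in> {1,2,3} \<and> (\<exists>l\<in>{1,2,3}. \<exists>k\<in>{1,2,3}.
              l \<noteq> k \<and> l \<noteq> s2 \<and> k \<noteq> s2 \<and> V l s2 > 0 \<and> V s2 k > 0))
       \<and> (\<forall>s1\<in>{1,2,3}. \<forall>s2\<in>{1,2,3}.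
            (\<exists>l\<in>{1,2,3}. \<exists>k\<in>{1,2,3}.
              l \<noteq> k \<and> l \<noteq> s1 \<and> k \<noteq> s1 \<and> W l s1 > 0 \<and> W s1 k > 0) \<longrightarrow>
            (\<exists>l\<in>{1,2,3}. \<exists>k\<in>{1,2,3}.
              l \<noteq> k \<and> l \<noteq> s2 \<and> k \<noteq> s2 \<and> V l s2 > 0 \<and> V s2 k > 0) \<longrightarrow>
            w1 s1 * v2 s2 - w2 s1 * v1 s2 > 0 \<longrightarrow>
            (let g = (\<lambda>x. vector [v2 s2 * f x $ 1 + v1 s2 * f x $ 2,
                                   w2 s1 * f x $ 1 + w1 s1 * f x $ 2] :: real^2)
             in f ` pareto_alt g X \<subseteq> pareto_set Y))"
proof -
  define rw where "rw l = w2 l / w1 l" for l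
  define rv where "rv l = v1 l / v2 l" for l
  have PW: "\<forall>l\<in>{1,2,3}. \<forall>s\<in>{1,2,3}. W l s > 0 \<longleftrightarrow> rw l < rw s"
  proof (intro ballI)
    fix l s :: nat assume "l \<in> {1,2,3}" "s \<in> {1,2,3}"
    then have "w1 l > 0" "w1 s > 0" using pos by auto
    then show "W l s > 0 \<longleftrightarrow> rw l < rw s"
      unfolding W_def rw_def by (simp add: divide_simps mult.commute)
  qed
  have PV: "\<forall>l\<in>{1,2,3}. \<forall>s\<in>{1,2,3}. V l s > 0 \<longleftrightarrow> rv l < rv s"
  proof (intro ballI)
    fix l s :: nat assume "l \<in> {1,2,3}" "s \<in> {1,2,3}"
    then have "v2 l > 0" "v2 s > 0" using pos by auto
    then show "V l s > 0 \<longleftrightarrow> rv l < rv s"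
      unfolding V_def rv_def by (simp add: divide_simps mult.commute)
  qed
  have dw: "rw l \<noteq> rw s" if "l \<in> {1,2,3}" "s \<in> {1,2,3}" "l \<noteq> s" for l s
  proof
    assume "rw l = rw s"
    moreover have "w1 l > 0" "w1 s > 0" using pos that by auto
    ultimately have "w1 l * w2 s = w2 l * w1 s" unfolding rw_def by (simp add: divide_simps mult.commute)
    then have "codirectional (vector [w1 l, - w2 l] :: real^2) (vector [w1 s, - w2 s])"
      using codir1 \<open>w1 l > 0\<close> \<open>w1 s > 0\<close> by blast
    then show False using ncod_y that by blast
  qed
  have dv: "rv l \<noteq> rv s" if "l \<in> {1,2,3}" "s \<in> {1,2,3}" "l \<noteq> s" for l s
  proof
    assume "rv l = rv s"
    moreover have "v2 l > 0" "v2 s > 0" using pos that by auto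
    ultimately have "v1 l * v2 s = v2 l * v1 s" unfolding rv_def by (simp add: divide_simps mult.commute)
    then have "codirectional (vector [- v1 l, v2 l] :: real^2) (vector [- v1 s, v2 s])"
      using codir2 \<open>v2 l > 0\<close> \<open>v2 s > 0\<close> by blast
    then show False using ncod_ybar that by blast
  qed
  have dw12: "rw 1 \<noteq> rw 2" by (rule dw) simp_all
  have dw13: "rw 1 \<noteq> rw 3" by (rule dw) simp_all
  have dw23: "rw 2 \<noteq> rw 3" by (rule dw) simp_all
  have dv12: "rv 1 \<noteq> rv 2" by (rule dv) simp_all
  have dv13: "rv 1 \<noteq> rv 3" by (rule dv) simp_all
  have dv23: "rv 2 \<noteq> rv 3" by (rule dv) simp_all
  have A: "\<exists>!s1. s1 \<in> {1,2,3} \<and> (\<exists>l\<in>{1,2,3}. \<exists>k\<in>{1,2,3}.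
              l \<noteq> k \<and> l \<noteq> s1 \<and> k \<noteq> s1 \<and> W l s1 > 0 \<and> W s1 k > 0)"
    using median3[OF dw12 dw13 dw23 PW] .
  have B: "\<exists>!s2. s2 \<in> {1,2,3} \<and> (\<exists>l\<in>{1,2,3}. \<exists>k\<in>{1,2,3}.
              l \<noteq> k \<and> l \<noteq> s2 \<and> k \<noteq> s2 \<and> V l s2 > 0 \<and> V s2 k > 0)"
    using median3[OF dv12 dv13 dv23 PV] .
  have C: "f ` pareto_alt (\<lambda>x. vector [v2 s2 * f x $ 1 + v1 s2 * f x $ 2,
                                   w2 s1 * f x $ 1 + w1 s1 * f x $ 2] :: real^2) X \<subseteq> pareto_set Y"
    if s: "s1 \<in> {1,2,3}" "s2 \<in> {1,2,3}" for s1 s2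
  proof
    define g where "g = (\<lambda>x. vector [v2 s2 * f x $ 1 + v1 s2 * f x $ 2,
                                   w2 s1 * f x $ 1 + w1 s1 * f x $ 2] :: real^2)"
    have p: "v2 s2 > 0" "v1 s2 > 0" "w2 s1 > 0" "w1 s1 > 0" using pos s by auto
    fix y assume "y \<in> f ` pareto_alt g X"
    then obtain x where y: "y = f x" and xa: "x \<in> pareto_alt g X" by blast
    from xa have x: "x \<in> X" and nd: "\<not> (\<exists>x'\<in>X. vgeq (g x') (g x))"
      unfolding pareto_alt_def by simp_all
    have nv: "\<not> vgeq y' y" if "y' \<in> Y" for y'
    proof
      assume v: "vgeq y' y"
      from that obtain x' where x': "x' \<in> X" "y' = f x'" unfolding Y_def by blast
      have vv: "\<forall>i. f x' $ i \<ge> f x $ i" "f x' \<noteq> f x"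
        using v unfolding vgeq_def x'(2) y by simp_all
      have a1: "f x' $ 1 \<ge> f x $ 1" and a2: "f x' $ 2 \<ge> f x $ 2"
        using vv(1) by simp_all
      have ne: "f x' $ 1 \<noteq> f x $ 1 \<or> f x' $ 2 \<noteq> f x $ 2"
      proof (rule ccontr)
        assume "\<not> (f x' $ 1 \<noteq> f x $ 1 \<or> f x' $ 2 \<noteq> f x $ 2)"
        then have "f x' = f x" unfolding vec_eq_iff forall_2 by simp
        then show False using vv(2) by simp
      qed
      have m1: "v2 s2 * f x $ 1 \<le> v2 s2 * f x' $ 1" "w2 s1 * f x $ 1 \<le> w2 s1 * f x' $ 1"
        using a1 p by (intro mult_left_mono; simp)+
      have m2: "v1 s2 * f x $ 2 \<le> v1 s2 * f x' $ 2" "w1 s1 * f x $ 2 \<le> w1 s1 * f x' $ 2"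
        using a2 p by (intro mult_left_mono; simp)+
      have st: "v2 s2 * f x $ 1 + v1 s2 * f x $ 2 < v2 s2 * f x' $ 1 + v1 s2 * f x' $ 2"
      proof (cases "f x' $ 1 \<noteq> f x $ 1")
        case True
        then have "f x $ 1 < f x' $ 1" using a1 by simp
        then have "v2 s2 * f x $ 1 < v2 s2 * f x' $ 1" using p(1) by (rule mult_strict_left_mono)
        then show ?thesis using m2 by linarith
      next
        case False
        then have "f x $ 2 < f x' $ 2" using a2 ne by simp
        then have "v1 s2 * f x $ 2 < v1 s2 * f x' $ 2" using p(2) by (rule mult_strict_left_mono)
        then show ?thesis using m1 by linarith
      qed
      have g1: "g x' $ 1 = v2 s2 * f x' $ 1 + v1 s2 * f x' $ 2" "g x $ 1 = v2 s2 * f x $ 1 + v1 s2 * f x $ 2"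
        unfolding g_def by simp_all
      have g2: "g x' $ 2 = w2 s1 * f x' $ 1 + w1 s1 * f x' $ 2" "g x $ 2 = w2 s1 * f x $ 1 + w1 s1 * f x $ 2"
        unfolding g_def by simp_all
      have h1: "(g x') $ 1 \<ge> (g x) $ 1" "(g x') $ 2 \<ge> (g x) $ 2" "(g x') $ 1 \<noteq> (g x) $ 1"
        using g1 g2 st m1 m2 by linarith+
      have "vgeq (g x') (g x)" unfolding vgeq_def
      proof
        show "\<forall>i. g x $ i \<le> g x' $ i" unfolding forall_2 using h1 by simp
        show "g x' \<noteq> g x" using h1(3) by metis
      qed
      then show False using nd x'(1) by blast
    qed
    have "y \<in> Y" unfolding Y_def using x y by blast
    then show "y \<in> pareto_set Y" unfolding pareto_set_def using nv by blast
  qed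
  show ?thesis
  proof (intro conjI A B ballI impI)
    fix s1 s2 :: nat assume "s1 \<in> {1,2,3}" "s2 \<in> {1,2,3}"
    then show "let g = (\<lambda>x. vector [v2 s2 * f x $ 1 + v1 s2 * f x $ 2,
                                   w2 s1 * f x $ 1 + w1 s1 * f x $ 2] :: real^2)
             in f ` pareto_alt g X \<subseteq> pareto_set Y" unfolding Let_def by (rule C)
  qed
qed

end
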